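(* Let $u(t,x)$ be a smooth function of $t$ and of $x\in S^1=\mathbb{R}/\mathbb{Z}\simeq[0,1)$, and consider the linear system $$\psi_{xxx}=-\lambda\, m\,\psi,\qquad \psi_t=-\tfrac{1}{\lambda}\psi_{xx}-u\psi_x+u_x\psi,$$ where $\lambda\in\mathbb{C}\setminus\{0\}$ is a spectral parameter and $\psi(t,x)$ is a scalar eigenfunction. (i) If $m=\mu(u)-u_{xx}$, then the compatibility condition $(\psi_t)_{xxx}=(\psi_{xxx})_t$ of this system is equivalent to $u$ satisfying the $\mu$DP equation $$\mu(u_t)-u_{txx}+3\mu(u)u_x-3u_xu_{xx}-uu_{xxx}=0.$$ (ii) If $m=-u_{xx}$, then the compatibility condition $(\psi_t)_{xxx}=(\psi_{xxx})_t$ is equivalent to $u$ satisfying the $\mu$B equation $$-u_{txx}-3u_xu_{xx}-uu_{xxx}=0.$$ Thus both the $\mu$DP and the $\mu$B equations admit this Lax pair formulation.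
   Context: Here $\mu(u)=\int_0^1 u\,dx$ denotes the mean of a periodic function. Both equations are instances of $Au_t+3u_xAu+uAu_x=0$, i.e. $m_t=-um_x-3u_xm$ with $m=Au$, where $A=\mu-\partial_x^2$ for $\mu$DP and $A=-\partial_x^2$ for $\mu$B. *)

theory Defs
  imports "HOL-Analysis.Analysis"
begin

text \<open>Functions of (t,x): first argument t (time), second argument x (space).\<close>

definition pdx :: "(real \<Rightarrow> real \<Rightarrow> real) \<Rightarrow> real \<Rightarrow> real \<Rightarrow> real" where
  "pdx f t x = deriv (\<lambda>y. f t y) x"

definition pdt :: "(real \<Rightarrow> real \<Rightarrow> real) \<Rightarrow> real \<Rightarrow> real \<Rightarrow> real" where
  "pdt f t x = deriv (\<lambda>s. f s x) t"

primrec iter_partial :: "bool list \<Rightarrow> (real \<Rightarrow> real \<Rightarrow> real) \<Rightarrow> real \<Rightarrow> real \<Rightarrow> real" where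
  "iter_partial [] f = f"
| "iter_partial (b # bs) f = (if b then pdt else pdx) (iter_partial bs f)"

definition smooth2 :: "(real \<Rightarrow> real \<Rightarrow> real) \<Rightarrow> bool" where
  "smooth2 f \<longleftrightarrow> (\<forall>bs. continuous_on UNIV (\<lambda>p. iter_partial bs f (fst p) (snd p)) \<and>
      (\<forall>t x. (\<lambda>y. iter_partial bs f t y) differentiable (at x) \<and>
             (\<lambda>s. iter_partial bs f s x) differentiable (at t)))"

text \<open>Functions on S^1 = R/Z, viewed as 1-periodic functions of x.\<close>
definition periodic_x :: "(real \<Rightarrow> real \<Rightarrow> real) \<Rightarrow> bool" where
  "periodic_x f \<longleftrightarrow> (\<forall>t x. f t (x + 1) = f t x)"

definition mean :: "(real \<Rightarrow> real \<Rightarrow> real) \<Rightarrow> real \<Rightarrow> real" where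
  "mean f t = integral {0..1} (\<lambda>x. f t x)"

definition cderiv :: "(real \<Rightarrow> complex) \<Rightarrow> real \<Rightarrow> complex" where
  "cderiv g x = vector_derivative g (at x)"

definition smooth_c :: "(real \<Rightarrow> complex) \<Rightarrow> bool" where
  "smooth_c g \<longleftrightarrow> (\<forall>k x. (cderiv ^^ k) g differentiable (at x))"

definition Vop :: "(real \<Rightarrow> real \<Rightarrow> real) \<Rightarrow> complex \<Rightarrow> real \<Rightarrow> (real \<Rightarrow> complex) \<Rightarrow> real \<Rightarrow> complex" where
  "Vop u lam t \<psi> x = - (1 / lam) * cderiv (cderiv \<psi>) x - of_real (u t x) * cderiv \<psi> x
                      + of_real (pdx u t x) * \<psi> x"

text \<open>Compatibility condition (psi_t)_xxx = (psi_xxx)_t of the system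
  psi_xxx = -lambda m psi, psi_t = Vop u lambda t psi, for every spectral parameter
  lambda <> 0: for every time t and every (smooth) solution psi of the x-equation at
  time t, computing (psi_t)_xxx with psi_t := V psi agrees with
  (psi_xxx)_t = (-lambda m psi)_t = -lambda m_t psi - lambda m psi_t, psi_t := V psi.\<close>
definition lax_compatible :: "(real \<Rightarrow> real \<Rightarrow> real) \<Rightarrow> (real \<Rightarrow> real \<Rightarrow> real) \<Rightarrow> bool" where
  "lax_compatible u m \<longleftrightarrow>
    (\<forall>lam::complex. lam \<noteq> 0 \<longrightarrow>
      (\<forall>t \<psi>. smooth_c \<psi> \<and> (\<forall>x. (cderiv ^^ 3) \<psi> x = - lam * of_real (m t x) * \<psi> x) \<longrightarrow>
        (\<forall>x. (cderiv ^^ 3) (Vop u lam t \<psi>) x =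
              - lam * of_real (pdt m t x) * \<psi> x - lam * of_real (m t x) * Vop u lam t \<psi> x)))"

end

theory Submission
  imports Defs
begin


definition SI :: "real \<Rightarrow> real \<Rightarrow> (real \<Rightarrow> 'a::banach) \<Rightarrow> 'a" where
  "SI a b g = integral {a..b} g - integral {b..a} g"

lemma SI_shift:
  fixes g :: "real \<Rightarrow> 'a::banach"
  assumes "continuous_on UNIV g" "c \<le> a" "c \<le> b"
  shows "SI a b g = integral {c..b} g - integral {c..a} g"
proof (cases "a \<le> b")
  case True
  have "integral {b..a} g = 0"
  proof (cases "a = b")
    case True then show ?thesis by simp
  next
    case False then show ?thesis using \<open>a \<le> b\<close> by simp
  qed
  moreover have "integral {c..a} g + integral {a..b} g = integral {c..b} g"
    using assms True by (intro Henstock_Kurzweil_Integration.integral_combine integrable_continuous_real continuous_on_subset[OF assms(1)]) auto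
  ultimately show ?thesis unfolding SI_def by (metis add_diff_cancel_left' diff_zero)
next
  case False
  have "integral {a..b} g = 0" using False by simp
  moreover have "integral {c..b} g + integral {b..a} g = integral {c..a} g"
    using assms False by (intro Henstock_Kurzweil_Integration.integral_combine integrable_continuous_real continuous_on_subset[OF assms(1)]) auto
  ultimately show ?thesis unfolding SI_def by (metis add_diff_cancel_left' minus_diff_eq diff_zero)
qed

lemma SI_deriv:
  fixes g :: "real \<Rightarrow> 'a::banach"
  assumes "continuous_on UNIV g"
  shows "((\<lambda>x. SI a x g) has_vector_derivative g x) (at x)"
proof -
  define c where "c = min a x - 1"
  have "((\<lambda>u. integral {c..u} g) has_vector_derivative g x) (at x within {c..x+1})"
    using assms by (intro integral_has_vector_derivative) (auto simp: c_def intro: continuous_on_subset)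
  hence "((\<lambda>u. integral {c..u} g) has_vector_derivative g x) (at x)"
    by (subst (asm) at_within_interior) (auto simp: c_def)
  hence "((\<lambda>u. integral {c..u} g - integral {c..a} g) has_vector_derivative g x) (at x)"
    by (auto intro!: derivative_eq_intros)
  then show ?thesis
    by (rule has_vector_derivative_transform_within_open[where S="{c<..}"])
       (auto simp: c_def intro!: SI_shift[OF assms, symmetric])
qed

lemma SI_same[simp]: "SI a a g = 0" by (simp add: SI_def)

lemma SI_diff:
  fixes g h :: "real \<Rightarrow> 'a::banach"
  assumes "continuous_on UNIV g" "continuous_on UNIV h"
  shows "SI a b (\<lambda>s. g s - h s) = SI a b g - SI a b h"
  unfolding SI_def using assms
  by (subst integral_diff, auto intro: integrable_continuous_real continuous_on_subset)+

lemma SI_bound: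
  fixes g :: "real \<Rightarrow> 'a::banach"
  assumes "continuous_on UNIV g" "\<And>s. norm (g s) \<le> K * exp (L * \<bar>s - a\<bar>)" "L > 0"
  shows "norm (SI a b g) \<le> K * (exp (L * \<bar>b - a\<bar>) - 1) / L"
proof (cases "a \<le> b")
  case True
  have "((\<lambda>s. K * exp (L * (s - a))) has_integral (K/L * exp (L*(b-a)) - K/L * exp (L*(a-a)))) {a..b}"
    using True \<open>L>0\<close>
    by (intro fundamental_theorem_of_calculus) (auto intro!: derivative_eq_intros simp: has_real_derivative_iff_has_vector_derivative[symmetric])
  hence "integral {a..b} (\<lambda>s. K * exp (L * (s - a))) = K/L * exp (L*(b-a)) - K/L * exp (L*(a-a))"
    by (rule integral_unique)
  hence I: "integral {a..b} (\<lambda>s. K * exp (L * (s - a))) = K * (exp (L * \<bar>b - a\<bar>) - 1) / L"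
    using True by (simp add: diff_divide_distrib right_diff_distrib)
  have "norm (SI a b g) = norm (integral {a..b} g)" using True
    by (cases "a = b") (auto simp: SI_def)
  also have "\<dots> \<le> integral {a..b} (\<lambda>s. K * exp (L * (s - a)))"
  proof (intro integral_norm_bound_integral)
    fix s assume "s \<in> {a..b}"
    then show "norm (g s) \<le> K * exp (L * (s - a))" using assms(2)[of s] by simp
  qed (use assms(1) in \<open>auto intro!: integrable_continuous_real continuous_intros intro: continuous_on_subset\<close>)
  finally show ?thesis using I by simp
next
  case False
  have "((\<lambda>s. K * exp (L * (a - s))) has_integral (- K/L * exp (L*(a-a)) - (- K/L * exp (L*(a-b))))) {b..a}"
    using False \<open>L>0\<close>
    by (intro fundamental_theorem_of_calculus) (auto intro!: derivative_eq_intros simp: has_real_derivative_iff_has_vector_derivative[symmetric])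
  hence "integral {b..a} (\<lambda>s. K * exp (L * (a - s))) = (- K/L * exp (L*(a-a)) - (- K/L * exp (L*(a-b))))"
    by (rule integral_unique)
  hence I: "integral {b..a} (\<lambda>s. K * exp (L * (a - s))) = K * (exp (L * \<bar>b - a\<bar>) - 1) / L"
    using False by (simp add: diff_divide_distrib right_diff_distrib)
  have "norm (SI a b g) = norm (integral {b..a} g)" using False
    by (auto simp: SI_def)
  also have "\<dots> \<le> integral {b..a} (\<lambda>s. K * exp (L * (a - s)))"
  proof (intro integral_norm_bound_integral)
    fix s assume "s \<in> {b..a}"
    then show "norm (g s) \<le> K * exp (L * (a - s))" using assms(2)[of s] by simp
  qed (use assms(1) in \<open>auto intro!: integrable_continuous_real continuous_intros intro: continuous_on_subset\<close>)
  finally show ?thesis using I by simp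
qed




type_synonym V3 = "real \<times> real \<times> real"

definition Aop :: "(real \<Rightarrow> real) \<Rightarrow> real \<Rightarrow> V3 \<Rightarrow> V3" where
  "Aop f s Y = (fst (snd Y), snd (snd Y), f s * fst Y)"

lemma Aop_diff: "Aop f s (Y - Z) = Aop f s Y - Aop f s Z"
  by (simp add: Aop_def right_diff_distrib)

lemma n3: "(norm ((p::real), (q::real), (r::real)))^2 = p^2+q^2+r^2"
  by (simp add: norm_Pair)

lemma Aop_norm:
  assumes "\<bar>f s\<bar> \<le> B"
  shows "norm (Aop f s Y) \<le> (1 + B) * norm Y"
proof -
  obtain a b c where Y: "Y = (a, b, c)" by (cases Y) auto
  have B0: "0 \<le> B" using assms by linarith
  have "\<bar>f s\<bar>^2 \<le> (1+B)^2"
    using assms by (intro power_mono) auto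
  hence f2: "(f s)^2 \<le> (1+B)^2" by simp
  have o: "1 \<le> (1+B)^2" using B0 by (intro one_le_power) auto
  have "(norm (Aop f s Y))^2 = b^2 + c^2 + (f s * a)^2"
    unfolding Aop_def Y by (simp only: fst_conv snd_conv n3)
  also have "\<dots> = b^2 + c^2 + (f s)^2 * a^2" by (simp only: power_mult_distrib)
  also have "\<dots> \<le> (1+B)^2 * a^2 + (1+B)^2 * b^2 + (1+B)^2 * c^2"
  proof -
    have "(f s)^2 * a^2 \<le> (1+B)^2 * a^2" using f2 by (intro mult_right_mono) auto
    moreover have "b^2 \<le> (1+B)^2 * b^2" using mult_right_mono[OF o, of "b^2"] by simp
    moreover have "c^2 \<le> (1+B)^2 * c^2" using mult_right_mono[OF o, of "c^2"] by simp
    ultimately show ?thesis by linarith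
  qed
  also have "\<dots> = (1+B)^2 * (norm Y)^2"
    unfolding Y n3 by (simp only: distrib_left)
  also have "\<dots> = ((1+B) * norm Y)^2" by (simp only: power_mult_distrib)
  finally have "(norm (Aop f s Y))^2 \<le> ((1+B) * norm Y)^2" .
  then show ?thesis
    by (rule power2_le_imp_le) (use B0 in auto)
qed

lemma Aop_cont:
  assumes "continuous_on UNIV f" "continuous_on UNIV Y"
  shows "continuous_on UNIV (\<lambda>s. Aop f s (Y s))"
  unfolding Aop_def using assms by (intro continuous_intros) auto

lemma ode_fix:
  fixes f :: "real \<Rightarrow> real"
  assumes fc: "continuous_on UNIV f" and fB: "\<And>s. \<bar>f s\<bar> \<le> B"
  shows "\<exists>Y. continuous_on UNIV Y \<and> (\<forall>x. Y x = Y0 + SI x0 x (\<lambda>s. Aop f s (Y s)))"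
proof -
  have B0: "0 \<le> B" using fB[of 0] by linarith
  define C where "C = 1 + B"
  define L where "L = 2 * C"
  have C0: "C > 0" and L0: "L > 0" using B0 by (auto simp: C_def L_def)
  define w where "w x = exp (L * \<bar>x - x0\<bar>)" for x
  have wc: "continuous_on UNIV w" unfolding w_def by (intro continuous_intros)
  define F where "F \<phi> x = exp (- (L * \<bar>x - x0\<bar>)) *\<^sub>R (Y0 + SI x0 x (\<lambda>s. Aop f s (w s *\<^sub>R apply_bcontfun \<phi> s)))"
    for \<phi> :: "real \<Rightarrow>\<^sub>C V3" and x
  have gc: "continuous_on UNIV (\<lambda>s. Aop f s (w s *\<^sub>R apply_bcontfun \<phi> s))" for \<phi>
    by (intro Aop_cont fc continuous_intros wc) auto
  have gb: "norm (Aop f s (w s *\<^sub>R apply_bcontfun \<phi> s)) \<le> (C * norm \<phi>) * exp (L * \<bar>s - x0\<bar>)" for \<phi> s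
  proof -
    have "norm (Aop f s (w s *\<^sub>R apply_bcontfun \<phi> s)) \<le> C * norm (w s *\<^sub>R apply_bcontfun \<phi> s)"
      using Aop_norm[of f s B, OF fB[of s]] unfolding C_def .
    also have "\<dots> = C * (w s * norm (apply_bcontfun \<phi> s))" by (simp add: w_def)
    also have "\<dots> \<le> C * (w s * norm \<phi>)"
      using C0 by (intro mult_left_mono norm_bounded) (auto simp: w_def)
    finally show ?thesis by (simp add: w_def mult_ac)
  qed
  have SIc: "continuous_on UNIV (\<lambda>x. SI x0 x g)" if "continuous_on UNIV g" for g :: "real \<Rightarrow> V3"
    using SI_deriv[OF that] has_vector_derivative_continuous
    by (metis continuous_at_imp_continuous_on)
  have Fin: "F \<phi> \<in> bcontfun" for \<phi>
  proof (rule bcontfun_normI)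
    show "continuous_on UNIV (F \<phi>)" unfolding F_def
      by (intro continuous_intros SIc gc)
    fix x
    have e: "exp (- (L * \<bar>x - x0\<bar>)) * exp (L * \<bar>x - x0\<bar>) = 1" by (simp add: exp_minus field_simps)
    have "norm (F \<phi> x) = exp (- (L * \<bar>x - x0\<bar>)) * norm (Y0 + SI x0 x (\<lambda>s. Aop f s (w s *\<^sub>R apply_bcontfun \<phi> s)))"
      unfolding F_def by simp
    also have "\<dots> \<le> exp (- (L * \<bar>x - x0\<bar>)) * (norm Y0 + norm (SI x0 x (\<lambda>s. Aop f s (w s *\<^sub>R apply_bcontfun \<phi> s))))"
      by (intro mult_left_mono norm_triangle_ineq) auto
    also have "\<dots> \<le> exp (- (L * \<bar>x - x0\<bar>)) * (norm Y0 + (C * norm \<phi>) * (exp (L * \<bar>x - x0\<bar>) - 1) / L)"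
      by (intro mult_left_mono add_left_mono SI_bound gc gb L0) auto
    also have "\<dots> \<le> norm Y0 + C * norm \<phi> / L"
    proof -
      have a: "exp (- (L * \<bar>x - x0\<bar>)) * norm Y0 \<le> norm Y0"
        using L0 by (intro mult_left_le_one_le) auto
      have b: "exp (- (L * \<bar>x - x0\<bar>)) * ((C * norm \<phi>) * (exp (L * \<bar>x - x0\<bar>) - 1) / L)
          = C * norm \<phi> / L * (1 - exp (- (L * \<bar>x - x0\<bar>)))"
        using e by (simp add: field_simps)
      have c: "C * norm \<phi> / L * (1 - exp (- (L * \<bar>x - x0\<bar>))) \<le> C * norm \<phi> / L"
        using C0 L0 by (intro mult_left_le) auto
      show ?thesis unfolding distrib_left using a b c by linarith
    qed
    finally show "norm (F \<phi> x) \<le> norm Y0 + C * norm \<phi> / L" .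
  qed
  define T where "T \<phi> = Bcontfun (F \<phi>)" for \<phi>
  have Tapp: "apply_bcontfun (T \<phi>) = F \<phi>" for \<phi>
    unfolding T_def using Fin by (simp add: Bcontfun_inverse)
  have contr: "dist (T \<phi>) (T \<psi>) \<le> 1/2 * dist \<phi> \<psi>" for \<phi> \<psi>
  proof (rule dist_bound)
    fix x
    let ?g = "\<lambda>\<phi> s. Aop f s (w s *\<^sub>R apply_bcontfun \<phi> s)"
    have e: "exp (- (L * \<bar>x - x0\<bar>)) * exp (L * \<bar>x - x0\<bar>) = 1" by (simp add: exp_minus field_simps)
    have "F \<phi> x - F \<psi> x = exp (- (L * \<bar>x - x0\<bar>)) *\<^sub>R SI x0 x (\<lambda>s. ?g \<phi> s - ?g \<psi> s)"
      unfolding F_def by (simp add: SI_diff[OF gc gc] scaleR_diff_right scaleR_add_right)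
    also have "(\<lambda>s. ?g \<phi> s - ?g \<psi> s) = (\<lambda>s. Aop f s (w s *\<^sub>R (apply_bcontfun \<phi> s - apply_bcontfun \<psi> s)))"
      by (simp add: Aop_diff scaleR_diff_right)
    finally have eq: "F \<phi> x - F \<psi> x = exp (- (L * \<bar>x - x0\<bar>)) *\<^sub>R SI x0 x (\<lambda>s. Aop f s (w s *\<^sub>R (apply_bcontfun \<phi> s - apply_bcontfun \<psi> s)))" .
    have hb: "norm (Aop f s (w s *\<^sub>R (apply_bcontfun \<phi> s - apply_bcontfun \<psi> s))) \<le> (C * dist \<phi> \<psi>) * exp (L * \<bar>s - x0\<bar>)" for s
    proof -
      have "norm (Aop f s (w s *\<^sub>R (apply_bcontfun \<phi> s - apply_bcontfun \<psi> s))) \<le> C * norm (w s *\<^sub>R (apply_bcontfun \<phi> s - apply_bcontfun \<psi> s))"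
        using Aop_norm[of f s B, OF fB[of s]] unfolding C_def .
      also have "\<dots> = C * (w s * dist (apply_bcontfun \<phi> s) (apply_bcontfun \<psi> s))" by (simp add: w_def dist_norm)
      also have "\<dots> \<le> C * (w s * dist \<phi> \<psi>)"
        using C0 by (intro mult_left_mono dist_bounded) (auto simp: w_def)
      finally show ?thesis by (simp add: w_def mult_ac)
    qed
    have hc: "continuous_on UNIV (\<lambda>s. Aop f s (w s *\<^sub>R (apply_bcontfun \<phi> s - apply_bcontfun \<psi> s)))"
      by (intro Aop_cont fc continuous_intros wc) auto
    have "dist (T \<phi> x) (T \<psi> x) = exp (- (L * \<bar>x - x0\<bar>)) * norm (SI x0 x (\<lambda>s. Aop f s (w s *\<^sub>R (apply_bcontfun \<phi> s - apply_bcontfun \<psi> s))))"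
      by (simp add: Tapp dist_norm eq)
    also have "\<dots> \<le> exp (- (L * \<bar>x - x0\<bar>)) * ((C * dist \<phi> \<psi>) * (exp (L * \<bar>x - x0\<bar>) - 1) / L)"
      by (intro mult_left_mono SI_bound hc hb L0) auto
    also have "\<dots> = C * dist \<phi> \<psi> / L * (1 - exp (- (L * \<bar>x - x0\<bar>)))"
      using e by (simp add: field_simps)
    also have "\<dots> \<le> C * dist \<phi> \<psi> / L"
      using C0 L0 by (intro mult_left_le) auto
    also have "\<dots> = 1/2 * dist \<phi> \<psi>" using C0 by (simp add: L_def)
    finally show "dist (T \<phi> x) (T \<psi> x) \<le> 1/2 * dist \<phi> \<psi>" .
  qed
  obtain \<phi> where fxp: "T \<phi> = \<phi>" using banach_fix_type[of "1/2" T] contr by auto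
  define Y where "Y x = w x *\<^sub>R apply_bcontfun \<phi> x" for x
  have "continuous_on UNIV Y" unfolding Y_def by (intro continuous_intros wc) auto
  moreover have "Y x = Y0 + SI x0 x (\<lambda>s. Aop f s (Y s))" for x
  proof -
    have e: "exp (L * \<bar>x - x0\<bar>) * exp (- (L * \<bar>x - x0\<bar>)) = 1" by (simp add: exp_minus field_simps)
    have "apply_bcontfun \<phi> x = F \<phi> x" using fxp Tapp by metis
    hence "Y x = w x *\<^sub>R F \<phi> x" by (simp add: Y_def)
    also have "\<dots> = Y0 + SI x0 x (\<lambda>s. Aop f s (w s *\<^sub>R apply_bcontfun \<phi> s))"
      unfolding F_def w_def using e by simp
    finally show ?thesis by (simp add: Y_def)
  qed
  ultimately show ?thesis by blast
qed

lemma hvd_fst: "(Y has_vector_derivative v) (at x) \<Longrightarrow> ((\<lambda>x. fst (Y x)) has_vector_derivative fst v) (at x)"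
  unfolding has_vector_derivative_def by (drule has_derivative_fst) simp

lemma hvd_snd: "(Y has_vector_derivative v) (at x) \<Longrightarrow> ((\<lambda>x. snd (Y x)) has_vector_derivative snd v) (at x)"
  unfolding has_vector_derivative_def by (drule has_derivative_snd) simp

lemma ode3_exists:
  fixes f :: "real \<Rightarrow> real"
  assumes fc: "continuous_on UNIV f" and fB: "\<And>s. \<bar>f s\<bar> \<le> B"
  shows "\<exists>p0 p1 p2. (\<forall>x. (p0 has_real_derivative p1 x) (at x)) \<and> (\<forall>x. (p1 has_real_derivative p2 x) (at x))
     \<and> (\<forall>x. (p2 has_real_derivative f x * p0 x) (at x)) \<and> p0 x0 = 1"
proof -
  obtain Y where Yc: "continuous_on UNIV Y" and Y: "\<And>x. Y x = (1,0,0) + SI x0 x (\<lambda>s. Aop f s (Y s))"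
    using ode_fix[OF fc fB, of "(1,0,0)" x0] by blast
  have D: "(Y has_vector_derivative Aop f x (Y x)) (at x)" for x
  proof -
    have "((\<lambda>x. (1,0,0) + SI x0 x (\<lambda>s. Aop f s (Y s))) has_vector_derivative Aop f x (Y x)) (at x)"
      using SI_deriv[OF Aop_cont[OF fc Yc]] by (auto intro!: derivative_eq_intros)
    then show ?thesis
      by (rule has_vector_derivative_transform_within_open[OF _ open_UNIV UNIV_I]) (rule Y[symmetric])
  qed
  define p0 where "p0 = (\<lambda>x. fst (Y x))"
  define p1 where "p1 = (\<lambda>x. fst (snd (Y x)))"
  define p2 where "p2 = (\<lambda>x. snd (snd (Y x)))"
  have "(p0 has_real_derivative p1 x) (at x)" for x
    using hvd_fst[OF D[of x]] by (simp add: p0_def p1_def Aop_def has_real_derivative_iff_has_vector_derivative)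
  moreover have "(p1 has_real_derivative p2 x) (at x)" for x
    using hvd_fst[OF hvd_snd[OF D[of x]]] by (simp add: p2_def p1_def Aop_def has_real_derivative_iff_has_vector_derivative)
  moreover have "(p2 has_real_derivative f x * p0 x) (at x)" for x
    using hvd_snd[OF hvd_snd[OF D[of x]]] by (simp add: p2_def p0_def Aop_def has_real_derivative_iff_has_vector_derivative)
  moreover have "p0 x0 = 1" using Y[of x0] by (simp add: p0_def)
  ultimately show ?thesis by blast
qed




definition Ck :: "nat \<Rightarrow> (real \<Rightarrow> real) \<Rightarrow> bool" where
  "Ck k g \<longleftrightarrow> (\<forall>j\<le>k. \<forall>x. (deriv ^^ j) g differentiable (at x))"

definition Cinf :: "(real \<Rightarrow> real) \<Rightarrow> bool" where
  "Cinf g \<longleftrightarrow> (\<forall>k x. (deriv ^^ k) g differentiable (at x))"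

lemma Cinf_Ck: "Cinf g \<longleftrightarrow> (\<forall>k. Ck k g)"
  unfolding Cinf_def Ck_def by auto

lemma Ck_0: "Ck 0 g \<longleftrightarrow> (\<forall>x. g differentiable (at x))"
  unfolding Ck_def by auto

lemma Ck_Suc: "Ck (Suc k) g \<longleftrightarrow> (\<forall>x. g differentiable (at x)) \<and> Ck k (deriv g)"
proof
  assume H: "Ck (Suc k) g"
  show "(\<forall>x. g differentiable (at x)) \<and> Ck k (deriv g)"
  proof
    show "\<forall>x. g differentiable (at x)" using H unfolding Ck_def by (metis funpow_0 zero_le)
    show "Ck k (deriv g)" unfolding Ck_def
    proof (intro allI impI)
      fix j x assume "j \<le> k"
      hence "(deriv ^^ Suc j) g differentiable (at x)" using H unfolding Ck_def by auto
      thus "(deriv ^^ j) (deriv g) differentiable (at x)" by (simp only: funpow_Suc_right o_def)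
    qed
  qed
next
  assume H: "(\<forall>x. g differentiable (at x)) \<and> Ck k (deriv g)"
  show "Ck (Suc k) g" unfolding Ck_def
  proof (intro allI impI)
    fix j x assume j: "j \<le> Suc k"
    show "(deriv ^^ j) g differentiable (at x)"
    proof (cases j)
      case 0 then show ?thesis using H by simp
    next
      case (Suc i)
      hence "(deriv ^^ i) (deriv g) differentiable (at x)" using H j unfolding Ck_def by auto
      thus ?thesis using Suc by (simp only: funpow_Suc_right o_def)
    qed
  qed
qed

lemma Ck_mono: "Ck (Suc k) g \<Longrightarrow> Ck k g"
  unfolding Ck_def by auto

lemma Dd: "(g::real\<Rightarrow>real) differentiable (at x) \<Longrightarrow> (g has_real_derivative deriv g x) (at x)"
  using DERIV_deriv_iff_real_differentiable by blast

lemma Dd2: "(g has_real_derivative D) (at x) \<Longrightarrow> (g::real\<Rightarrow>real) differentiable (at x)"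
  using DERIV_deriv_iff_real_differentiable DERIV_imp_deriv by metis

lemma deriv_add_fun:
  assumes "\<forall>x. (g::real\<Rightarrow>real) differentiable (at x)" "\<forall>x. h differentiable (at x)"
  shows "deriv (\<lambda>x. g x + h x) = (\<lambda>x. deriv g x + deriv h x)"
proof
  fix x show "deriv (\<lambda>x. g x + h x) x = deriv g x + deriv h x"
    using assms by (intro DERIV_imp_deriv derivative_intros Dd) auto
qed

lemma deriv_mult_fun:
  assumes "\<forall>x. (g::real\<Rightarrow>real) differentiable (at x)" "\<forall>x. h differentiable (at x)"
  shows "deriv (\<lambda>x. g x * h x) = (\<lambda>x. deriv g x * h x + g x * deriv h x)"
proof
  fix x show "deriv (\<lambda>x. g x * h x) x = deriv g x * h x + g x * deriv h x"
  proof (rule DERIV_imp_deriv)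
    have "((\<lambda>x. g x * h x) has_real_derivative g x * deriv h x + deriv g x * h x) (at x)"
      using assms by (intro DERIV_mult' Dd) auto
    then show "((\<lambda>x. g x * h x) has_real_derivative deriv g x * h x + g x * deriv h x) (at x)"
      by (simp only: add.commute)
  qed
qed

lemma Ck_add: "Ck k g \<Longrightarrow> Ck k h \<Longrightarrow> Ck k (\<lambda>x. g x + h x)"
proof (induction k arbitrary: g h)
  case 0 then show ?case unfolding Ck_0 by auto
next
  case (Suc k)
  have dg: "\<forall>x. g differentiable (at x)" and dh: "\<forall>x. h differentiable (at x)"
    using Suc.prems unfolding Ck_Suc by auto
  show ?case unfolding Ck_Suc deriv_add_fun[OF dg dh]
    using Suc.IH[of "deriv g" "deriv h"] Suc.prems dg dh unfolding Ck_Suc by auto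
qed

lemma Ck_mult: "Ck k g \<Longrightarrow> Ck k h \<Longrightarrow> Ck k (\<lambda>x. g x * h x)"
proof (induction k arbitrary: g h)
  case 0 then show ?case unfolding Ck_0 by auto
next
  case (Suc k)
  have dg: "\<forall>x. g differentiable (at x)" and dh: "\<forall>x. h differentiable (at x)"
    using Suc.prems unfolding Ck_Suc by auto
  have "Ck k (\<lambda>x. deriv g x * h x)" using Suc.IH[of "deriv g" h] Suc.prems Ck_mono unfolding Ck_Suc by auto
  moreover have "Ck k (\<lambda>x. g x * deriv h x)" using Suc.IH[of g "deriv h"] Suc.prems Ck_mono unfolding Ck_Suc by auto
  ultimately show ?case unfolding Ck_Suc deriv_mult_fun[OF dg dh]
    using dg dh Ck_add by auto
qed

lemma Ck_const: "Ck k (\<lambda>x. c)"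
proof (induction k arbitrary: c)
  case 0 then show ?case unfolding Ck_0 by auto
next
  case (Suc k)
  have "deriv (\<lambda>x. c) = (\<lambda>x. 0)" by (rule ext) simp
  then show ?case unfolding Ck_Suc using Suc.IH by auto
qed

lemma Cinf_add: "Cinf g \<Longrightarrow> Cinf h \<Longrightarrow> Cinf (\<lambda>x. g x + h x)"
  using Ck_add unfolding Cinf_Ck by blast
lemma Cinf_mult: "Cinf g \<Longrightarrow> Cinf h \<Longrightarrow> Cinf (\<lambda>x. g x * h x)"
  using Ck_mult unfolding Cinf_Ck by blast
lemma Cinf_const: "Cinf (\<lambda>x. c)"
  using Ck_const unfolding Cinf_Ck by blast
lemma Cinf_deriv: "Cinf g \<Longrightarrow> Cinf (deriv g)"
  unfolding Cinf_Ck using Ck_Suc by blast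
lemma Cinf_diff_at: "Cinf g \<Longrightarrow> g differentiable (at x)"
  unfolding Cinf_Ck using Ck_0 by blast

lemma ode_smooth:
  fixes f p0 p1 p2 :: "real \<Rightarrow> real"
  assumes fC: "Cinf f"
    and d0: "\<And>x. (p0 has_real_derivative p1 x) (at x)"
    and d1: "\<And>x. (p1 has_real_derivative p2 x) (at x)"
    and d2: "\<And>x. (p2 has_real_derivative f x * p0 x) (at x)"
  shows "Cinf p0"
proof -
  have D: "((\<lambda>x. a0 x * p0 x + a1 x * p1 x + a2 x * p2 x) has_real_derivative
        (deriv a0 x + a2 x * f x) * p0 x + (a0 x + deriv a1 x) * p1 x + (a1 x + deriv a2 x) * p2 x) (at x)"
    if "Cinf a0" "Cinf a1" "Cinf a2" for a0 a1 a2 x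
  proof -
    have "((\<lambda>x. a0 x * p0 x + a1 x * p1 x + a2 x * p2 x) has_real_derivative
        (a0 x * p1 x + deriv a0 x * p0 x) + (a1 x * p2 x + deriv a1 x * p1 x) + (a2 x * (f x * p0 x) + deriv a2 x * p2 x)) (at x)"
      using Dd[OF Cinf_diff_at[OF that(1)]] Dd[OF Cinf_diff_at[OF that(2)]] Dd[OF Cinf_diff_at[OF that(3)]]
      by (intro DERIV_add DERIV_mult' d0 d1 d2) auto
    then show ?thesis by (simp add: algebra_simps)
  qed
  have main: "Ck k (\<lambda>x. a0 x * p0 x + a1 x * p1 x + a2 x * p2 x)"
    if "Cinf a0" "Cinf a1" "Cinf a2" for k a0 a1 a2
    using that
  proof (induction k arbitrary: a0 a1 a2)
    case 0
    then show ?case unfolding Ck_0 using Dd2[OF D[OF "0.prems"]] by blast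
  next
    case (Suc k)
    have E: "deriv (\<lambda>x. a0 x * p0 x + a1 x * p1 x + a2 x * p2 x) =
        (\<lambda>x. (deriv a0 x + a2 x * f x) * p0 x + (a0 x + deriv a1 x) * p1 x + (a1 x + deriv a2 x) * p2 x)"
      using D[OF Suc.prems] by (intro ext DERIV_imp_deriv)
    have c0: "Cinf (\<lambda>x. deriv a0 x + a2 x * f x)"
      by (rule Cinf_add[OF Cinf_deriv[OF Suc.prems(1)] Cinf_mult[OF Suc.prems(3) fC]])
    have c1: "Cinf (\<lambda>x. a0 x + deriv a1 x)"
      by (rule Cinf_add[OF Suc.prems(1) Cinf_deriv[OF Suc.prems(2)]])
    have c2: "Cinf (\<lambda>x. a1 x + deriv a2 x)"
      by (rule Cinf_add[OF Suc.prems(2) Cinf_deriv[OF Suc.prems(3)]])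
    have "Ck k (deriv (\<lambda>x. a0 x * p0 x + a1 x * p1 x + a2 x * p2 x))"
      unfolding E by (rule Suc.IH[OF c0 c1 c2])
    moreover have "\<forall>x. (\<lambda>x. a0 x * p0 x + a1 x * p1 x + a2 x * p2 x) differentiable (at x)"
      using Dd2[OF D[OF Suc.prems]] by blast
    ultimately show ?case unfolding Ck_Suc by blast
  qed
  have "Cinf (\<lambda>x. 1 * p0 x + 0 * p1 x + 0 * p2 x)"
    unfolding Cinf_Ck using main[OF Cinf_const Cinf_const Cinf_const] by blast
  then show ?thesis by simp
qed

lemma cderiv_of_real:
  assumes "\<forall>x. g differentiable (at x)"
  shows "cderiv (\<lambda>x. complex_of_real (g x)) = (\<lambda>x. complex_of_real (deriv g x))"
  unfolding cderiv_def using assms by (intro ext vector_derivative_of_real_left) auto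

lemma Cinf_smooth_c:
  assumes "Cinf g"
  shows "smooth_c (\<lambda>x. complex_of_real (g x))"
proof -
  have eq: "(cderiv ^^ k) (\<lambda>x. complex_of_real (g x)) = (\<lambda>x. complex_of_real ((deriv ^^ k) g x))" for k
  proof (induction k)
    case 0 then show ?case by simp
  next
    case (Suc k)
    have "\<forall>x. (deriv ^^ k) g differentiable (at x)" using assms unfolding Cinf_def by auto
    then show ?case using Suc by (simp add: cderiv_of_real)
  qed
  show ?thesis unfolding smooth_c_def eq
  proof (intro allI)
    fix k x
    have "((deriv ^^ k) g has_real_derivative deriv ((deriv ^^ k) g) x) (at x)"
      using assms unfolding Cinf_def by (intro Dd) auto
    then show "(\<lambda>x. complex_of_real ((deriv ^^ k) g x)) differentiable (at x)"
      by (rule differentiableI_vector[OF has_vector_derivative_of_real])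
  qed
qed




lemma cderiv_eq:
  assumes "\<And>x. (h has_vector_derivative h' x) (at x)"
  shows "cderiv h = h'"
  unfolding cderiv_def using assms by (intro ext vector_derivative_at)

lemma hvd_Cinf:
  assumes "Cinf g"
  shows "((\<lambda>x. complex_of_real (g x)) has_vector_derivative complex_of_real (deriv g x)) (at x)"
  using assms by (intro has_vector_derivative_of_real Dd Cinf_diff_at)

lemma compat_identity:
  fixes g M :: "real \<Rightarrow> real" and lam :: complex and \<psi> :: "real \<Rightarrow> complex"
  assumes gC: "Cinf g" and MC: "Cinf M"
    and dM: "\<And>x. deriv M x = - (deriv ^^ 3) g x"
    and lam: "lam \<noteq> 0"
    and sm: "smooth_c \<psi>"
    and eq3: "\<And>x. (cderiv ^^ 3) \<psi> x = - lam * of_real (M x) * \<psi> x"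
    and W: "W = (\<lambda>x. - (1 / lam) * cderiv (cderiv \<psi>) x - of_real (g x) * cderiv \<psi> x
                      + of_real (deriv g x) * \<psi> x)"
  shows "(cderiv ^^ 3) W x - (- lam * of_real Mt * \<psi> x - lam * of_real (M x) * W x)
     = lam * of_real (3 * deriv g x * M x + g x * deriv M x + Mt) * \<psi> x"
proof -
  define G where "G k x = complex_of_real ((deriv ^^ k) g x)" for k x
  have gCk: "Cinf ((deriv ^^ k) g)" for k
    by (induction k) (auto simp: gC Cinf_deriv)
  have hG: "(G k has_vector_derivative G (Suc k) x) (at x)" for k x
    unfolding G_def[abs_def] using hvd_Cinf[OF gCk[of k]] by simp
  have G0: "G 0 x = of_real (g x)" and G1: "G 1 x = of_real (deriv g x)" for x
    by (simp_all add: G_def)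
  define P where "P k = (cderiv ^^ k) \<psi>" for k
  have hP: "(P k has_vector_derivative P (Suc k) x) (at x)" for k x
  proof -
    have "P k differentiable (at x)" using sm unfolding smooth_c_def P_def by auto
    then show ?thesis unfolding P_def by (simp add: vector_derivative_works cderiv_def)
  qed
  define M0 where "M0 x = complex_of_real (M x)" for x
  define M1 where "M1 x = complex_of_real (deriv M x)" for x
  define M2 where "M2 x = complex_of_real (deriv (deriv M) x)" for x
  have hM0: "(M0 has_vector_derivative M1 x) (at x)" for x
    unfolding M0_def[abs_def] M1_def using hvd_Cinf[OF MC] by simp
  have hM1: "(M1 has_vector_derivative M2 x) (at x)" for x
    unfolding M1_def[abs_def] M2_def using hvd_Cinf[OF Cinf_deriv[OF MC]] by simp
  have P3: "P 3 = (\<lambda>x. - lam * M0 x * P 0 x)"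
    using eq3 by (auto simp: P_def M0_def)
  have P4: "P 4 = (\<lambda>x. - lam * (M0 x * P 1 x + M1 x * P 0 x))"
  proof -
    have "P 4 = cderiv (P 3)" by (simp add: P_def numeral_eq_Suc)
    also have "\<dots> = (\<lambda>x. - lam * (M0 x * P 1 x + M1 x * P 0 x))" unfolding P3
      by (rule cderiv_eq) (auto intro!: derivative_eq_intros hP hM0 simp: algebra_simps)
    finally show ?thesis .
  qed
  have P5: "P 5 = (\<lambda>x. - lam * (M0 x * P 2 x + 2 * M1 x * P 1 x + M2 x * P 0 x))"
  proof -
    have "P 5 = cderiv (P 4)" by (simp add: P_def numeral_eq_Suc)
    also have "\<dots> = (\<lambda>x. - lam * (M0 x * P 2 x + 2 * M1 x * P 1 x + M2 x * P 0 x))" unfolding P4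
      by (rule cderiv_eq) (auto intro!: derivative_eq_intros hP hM0 hM1 simp: algebra_simps numeral_2_eq_2)
    finally show ?thesis .
  qed
  have W0: "W = (\<lambda>x. - (1 / lam) * P 2 x - G 0 x * P 1 x + G 1 x * P 0 x)"
    unfolding W by (simp add: P_def G_def numeral_2_eq_2)
  define W1 where "W1 x = - (1 / lam) * P 3 x - G 0 x * P 2 x + G 2 x * P 0 x" for x
  define W2 where "W2 x = - (1 / lam) * P 4 x - G 1 x * P 2 x - G 0 x * P 3 x + G 3 x * P 0 x + G 2 x * P 1 x" for x
  define W3 where "W3 x = - (1 / lam) * P 5 x - 2 * G 1 x * P 3 x - G 0 x * P 4 x + G 4 x * P 0 x + 2 * G 3 x * P 1 x" for x
  have cW: "cderiv W = W1" unfolding W0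
    by (rule cderiv_eq) (auto intro!: derivative_eq_intros hP hG simp: W1_def algebra_simps numeral_eq_Suc)
  have cW1: "cderiv W1 = W2" unfolding W1_def[abs_def]
    by (rule cderiv_eq) (auto intro!: derivative_eq_intros hP hG simp: W2_def algebra_simps numeral_eq_Suc)
  have cW2: "cderiv W2 = W3" unfolding W2_def[abs_def]
    by (rule cderiv_eq) (auto intro!: derivative_eq_intros hP hG simp: W3_def algebra_simps numeral_eq_Suc)
  have W3eq: "(cderiv ^^ 3) W = W3" by (simp add: numeral_eq_Suc cW cW1 cW2)
  have dM': "deriv M = (\<lambda>x. - (deriv ^^ 3) g x)" using dM by auto
  have M1G: "M1 x = - G 3 x" for x by (simp add: M1_def G_def dM)
  have M2G: "M2 x = - G 4 x" for x
  proof -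
    have "deriv (deriv M) x = - (deriv ^^ 4) g x" unfolding dM'
      using Dd[OF Cinf_diff_at[OF gCk[of 3]], of x]
      by (intro DERIV_imp_deriv) (auto intro!: derivative_eq_intros simp: numeral_eq_Suc)
    then show ?thesis by (simp add: M2_def G_def)
  qed
  have P0: "P 0 = \<psi>" by (simp add: P_def)
  have Wx: "W x = - (1 / lam) * P 2 x - G 0 x * P 1 x + G 1 x * P 0 x" by (simp add: W0)
  have R: "complex_of_real (3 * deriv g x * M x + g x * deriv M x + Mt) = 3 * G 1 x * M0 x - G 0 x * G 3 x + of_real Mt"
    by (simp add: G_def M0_def dM)
  have "(cderiv ^^ 3) W x = W3 x" using W3eq by simp
  also have "\<dots> = - (1 / lam) * (- lam * (M0 x * P 2 x + 2 * (- G 3 x) * P 1 x + (- G 4 x) * P 0 x))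
      - 2 * G 1 x * (- lam * M0 x * P 0 x) - G 0 x * (- lam * (M0 x * P 1 x + (- G 3 x) * P 0 x))
      + G 4 x * P 0 x + 2 * G 3 x * P 1 x"
    unfolding W3_def P5 P4 P3 M2G M1G by simp
  finally have L: "(cderiv ^^ 3) W x = \<dots>" .
  show ?thesis unfolding L R Wx M0_def[symmetric] P0[symmetric]
    using lam by (simp add: field_simps)
qed




lemma iter_append: "iter_partial (bs @ cs) f = iter_partial bs (iter_partial cs f)"
  by (induction bs) auto

lemma smooth2_iter: "smooth2 u \<Longrightarrow> smooth2 (iter_partial bs u)"
  unfolding smooth2_def by (simp add: iter_append[symmetric])

lemma smooth2_cont: "smooth2 g \<Longrightarrow> continuous_on UNIV (\<lambda>p. g (fst p) (snd p))"
  unfolding smooth2_def by (metis iter_partial.simps(1))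

lemma smooth2_dx: "smooth2 g \<Longrightarrow> (\<lambda>y. g t y) differentiable (at x)"
  unfolding smooth2_def by (metis iter_partial.simps(1))

lemma smooth2_dt: "smooth2 g \<Longrightarrow> (\<lambda>s. g s x) differentiable (at t)"
  unfolding smooth2_def by (metis iter_partial.simps(1))

lemma smooth2_pdx: "smooth2 g \<Longrightarrow> smooth2 (pdx g)"
  using smooth2_iter[of g "[False]"] by simp

lemma smooth2_pdt: "smooth2 g \<Longrightarrow> smooth2 (pdt g)"
  using smooth2_iter[of g "[True]"] by simp

lemma cont_x: "smooth2 g \<Longrightarrow> continuous_on UNIV (\<lambda>y. g t y)"
proof -
  assume "smooth2 g"
  hence "continuous_on UNIV (\<lambda>p. g (fst p) (snd p))" by (rule smooth2_cont)
  hence "continuous_on UNIV ((\<lambda>p. g (fst p) (snd p)) \<circ> (\<lambda>y. (t, y)))"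
    by (intro continuous_on_compose continuous_intros) (auto intro: continuous_on_subset)
  thus ?thesis by (simp add: o_def)
qed

lemma Cinf_x:
  assumes "smooth2 g" shows "Cinf (\<lambda>y. g t y)"
proof -
  have eq: "(deriv ^^ k) (\<lambda>y. g t y) = (\<lambda>y. iter_partial (replicate k False) g t y)" for k
  proof (induction k)
    case 0 then show ?case by simp
  next
    case (Suc k) then show ?case by (simp add: pdx_def[abs_def])
  qed
  show ?thesis unfolding Cinf_def eq
    using smooth2_dx[OF smooth2_iter[OF assms]] by blast
qed

lemma deriv_x_iter: "(deriv ^^ k) (\<lambda>y. g t y) = (\<lambda>y. iter_partial (replicate k False) g t y)"
  by (induction k) (simp_all add: pdx_def[abs_def])

lemma mixed:
  assumes sg: "smooth2 g"
  shows "pdt (pdx g) t x = pdx (pdt g) t x"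
proof -
  define a where "a = x - 1"
  define h where "h = pdx g"
  have sh: "smooth2 h" using smooth2_pdx[OF sg] by (simp add: h_def)
  have hd: "((\<lambda>y. g s y) has_real_derivative h s y) (at y)" for s y
    unfolding h_def pdx_def using Dd[OF smooth2_dx[OF sg]] .
  have htd: "((\<lambda>s. h s z) has_real_derivative pdt h s z) (at s)" for s z
    unfolding pdt_def using Dd[OF smooth2_dt[OF sh]] .
  have contc: "continuous_on UNIV (\<lambda>p. pdt h (fst p) (snd p))" by (rule smooth2_cont[OF smooth2_pdt[OF sh]])
  have FTC: "g s y = g s a + integral {a..y} (\<lambda>z. h s z)" if "a \<le> y" for s y
  proof -
    have "((\<lambda>z. h s z) has_integral (g s y - g s a)) {a..y}"
      using that hd by (intro fundamental_theorem_of_calculus)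
        (auto simp: has_real_derivative_iff_has_vector_derivative[symmetric] intro: has_field_derivative_at_within)
    then show ?thesis by (simp add: integral_unique)
  qed
  have gt: "((\<lambda>s. g s a) has_real_derivative pdt g s a) (at s)" for s
    unfolding pdt_def using Dd[OF smooth2_dt[OF sg]] .
  have L: "((\<lambda>s. integral {a..y} (\<lambda>z. h s z)) has_real_derivative integral {a..y} (\<lambda>z. pdt h t z)) (at t)" for y
  proof -
    have "((\<lambda>s. integral (cbox a y) (\<lambda>z. h s z)) has_field_derivative integral (cbox a y) (\<lambda>z. pdt h t z)) (at t within UNIV)"
    proof (rule leibniz_rule_field_derivative[where fx="\<lambda>s z. pdt h s z"])
      show "((\<lambda>s. h s z) has_field_derivative pdt h s z) (at s within UNIV)" for s z using htd by simp
      show "(\<lambda>z. h s z) integrable_on cbox a y" for s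
        using cont_x[OF sh, of s] by (auto intro!: integrable_continuous_real intro: continuous_on_subset)
      show "continuous_on (UNIV \<times> cbox a y) (\<lambda>(s, z). pdt h s z)"
        using contc by (auto simp: split_beta intro: continuous_on_subset)
    qed auto
    then show ?thesis by simp
  qed
  have PT: "pdt g t y = pdt g t a + integral {a..y} (\<lambda>z. pdt h t z)" if "a \<le> y" for y
  proof -
    have "((\<lambda>s. g s a + integral {a..y} (\<lambda>z. h s z)) has_real_derivative pdt g t a + integral {a..y} (\<lambda>z. pdt h t z)) (at t)"
      by (intro DERIV_add gt L)
    moreover have "(\<lambda>s. g s y) = (\<lambda>s. g s a + integral {a..y} (\<lambda>z. h s z))"
      using FTC[OF that] by auto
    ultimately show ?thesis unfolding pdt_def by (simp add: DERIV_imp_deriv)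
  qed
  have cx: "continuous_on UNIV (\<lambda>z. pdt h t z)" by (rule cont_x[OF smooth2_pdt[OF sh]])
  have "((\<lambda>y. integral {a..y} (\<lambda>z. pdt h t z)) has_real_derivative pdt h t x) (at x within {a..x+1})"
    using cx by (intro integral_has_real_derivative) (auto simp: a_def intro: continuous_on_subset)
  hence "((\<lambda>y. integral {a..y} (\<lambda>z. pdt h t z)) has_real_derivative pdt h t x) (at x)"
    by (subst (asm) at_within_interior) (auto simp: a_def)
  hence "((\<lambda>y. pdt g t a + integral {a..y} (\<lambda>z. pdt h t z)) has_real_derivative pdt h t x) (at x)"
    by (auto intro!: derivative_eq_intros)
  hence "((\<lambda>y. pdt g t y) has_real_derivative pdt h t x) (at x)"
  proof (rule has_field_derivative_transform_within_open[where S="{a<..}"])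
    fix y assume "y \<in> {a<..}"
    then show "pdt g t a + integral {a..y} (\<lambda>z. pdt h t z) = pdt g t y"
      by (intro PT[symmetric]) auto
  qed (auto simp: a_def)
  hence "pdx (pdt g) t x = pdt h t x" unfolding pdx_def by (rule DERIV_imp_deriv)
  then show ?thesis by (simp add: h_def)
qed

lemma mean_deriv:
  assumes su: "smooth2 u"
  shows "((\<lambda>s. mean u s) has_real_derivative mean (pdt u) t) (at t)"
proof -
  have su': "smooth2 (pdt u)" by (rule smooth2_pdt[OF su])
  have "((\<lambda>s. integral (cbox 0 1) (\<lambda>z. u s z)) has_field_derivative integral (cbox 0 1) (\<lambda>z. pdt u t z)) (at t within UNIV)"
  proof (rule leibniz_rule_field_derivative[where fx="\<lambda>s z. pdt u s z"])
    show "((\<lambda>s. u s z) has_field_derivative pdt u s z) (at s within UNIV)" for s z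
      unfolding pdt_def using Dd[OF smooth2_dt[OF su]] by simp
    show "(\<lambda>z. u s z) integrable_on cbox 0 1" for s
      using cont_x[OF su, of s] by (auto intro!: integrable_continuous_real intro: continuous_on_subset)
    show "continuous_on (UNIV \<times> cbox 0 1) (\<lambda>(s, z). pdt u s z)"
      using smooth2_cont[OF su'] by (auto simp: split_beta intro: continuous_on_subset)
  qed auto
  then show ?thesis by (simp add: mean_def)
qed

lemma periodic_deriv:
  assumes "\<And>y. g (y + 1) = (g y :: real)"
  shows "deriv g (y + 1) = deriv g y"
proof -
  have "deriv g (y + 1) = deriv (\<lambda>x. g (x + 1)) y"
    unfolding deriv_def DERIV_shift ..
  also have "(\<lambda>x. g (x + 1)) = g" using assms by auto
  finally show ?thesis .
qed

lemma periodic_iter: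
  assumes "periodic_x u"
  shows "(deriv ^^ k) (\<lambda>y. u t y) (y + 1) = (deriv ^^ k) (\<lambda>y. u t y) y"
proof (induction k arbitrary: y)
  case 0 then show ?case using assms by (simp add: periodic_x_def)
next
  case (Suc k)
  show ?case by (simp only: funpow.simps o_apply) (rule periodic_deriv[of "(deriv ^^ k) (\<lambda>y. u t y)", OF Suc.IH])
qed

lemma periodic_bounded:
  fixes g :: "real \<Rightarrow> real"
  assumes per: "\<And>y. g (y + 1) = g y" and c: "continuous_on UNIV g"
  shows "\<exists>B. \<forall>y. \<bar>g y\<bar> \<le> B"
proof -
  have "compact (g ` {0..1})" by (intro compact_continuous_image continuous_on_subset[OF c]) auto
  then obtain B where B: "\<And>z. z \<in> {0..1} \<Longrightarrow> \<bar>g z\<bar> \<le> B"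
    by (metis bounded_iff compact_imp_bounded image_eqI real_norm_def)
  have pn: "g (z + real n) = g z" for n z
  proof (induction n arbitrary: z)
    case 0 then show ?case by simp
  next
    case (Suc n)
    have "g (z + real (Suc n)) = g ((z + real n) + 1)" by (simp add: algebra_simps)
    also have "\<dots> = g z" using per Suc by simp
    finally show ?case .
  qed
  have "\<bar>g y\<bar> \<le> B" for y
  proof -
    define k where "k = \<lfloor>y\<rfloor>"
    have fr: "y - of_int k \<in> {0..1}" unfolding k_def by (auto simp: floor_le_iff) linarith
    have "g y = g (y - of_int k)"
    proof (cases "k \<ge> 0")
      case True
      then have "y = (y - of_int k) + real (nat k)" by simp
      then show ?thesis using pn by metis
    next
      case False
      then have "y - of_int k = y + real (nat (-k))" by simp
      then show ?thesis using pn by metis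
    qed
    then show ?thesis using B[OF fr] by simp
  qed
  then show ?thesis by blast
qed




lemma cderiv_pow_of_real:
  assumes "Cinf g"
  shows "(cderiv ^^ k) (\<lambda>x. complex_of_real (g x)) = (\<lambda>x. complex_of_real ((deriv ^^ k) g x))"
proof (induction k)
  case 0 then show ?case by simp
next
  case (Suc k)
  have "\<forall>x. (deriv ^^ k) g differentiable (at x)" using assms unfolding Cinf_def by auto
  then show ?case using Suc by (simp add: cderiv_of_real)
qed

lemma main_general:
  fixes u m :: "real \<Rightarrow> real \<Rightarrow> real"
  assumes su: "smooth2 u"
    and mC: "\<And>t. Cinf (\<lambda>y. m t y)"
    and mcont: "\<And>t. continuous_on UNIV (\<lambda>y. m t y)"
    and mB: "\<And>t. \<exists>B. \<forall>y. \<bar>m t y\<bar> \<le> B"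
    and dM: "\<And>t x. deriv (\<lambda>y. m t y) x = - (deriv ^^ 3) (\<lambda>y. u t y) x"
  shows "lax_compatible u m \<longleftrightarrow>
     (\<forall>t x. 3 * pdx u t x * m t x + u t x * deriv (\<lambda>y. m t y) x + pdt m t x = 0)"
proof -
  have Vop_eq: "Vop u lam t \<psi> = (\<lambda>x. - (1 / lam) * cderiv (cderiv \<psi>) x - of_real (u t x) * cderiv \<psi> x
                      + of_real (deriv (\<lambda>y. u t y) x) * \<psi> x)" for lam t \<psi>
    by (rule ext) (simp add: Vop_def pdx_def)
  have ID: "(cderiv ^^ 3) (Vop u lam t \<psi>) x - (- lam * of_real (pdt m t x) * \<psi> x - lam * of_real (m t x) * Vop u lam t \<psi> x)
     = lam * of_real (3 * pdx u t x * m t x + u t x * deriv (\<lambda>y. m t y) x + pdt m t x) * \<psi> x"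
    if lam: "lam \<noteq> 0" and sm: "smooth_c \<psi>" and e3: "\<And>x. (cderiv ^^ 3) \<psi> x = - lam * of_real (m t x) * \<psi> x"
    for lam t \<psi> x
    using compat_identity[OF Cinf_x[OF su] mC dM lam sm e3 Vop_eq, of x "pdt m t x"]
    by (simp add: pdx_def)
  show ?thesis
  proof
    assume H: "\<forall>t x. 3 * pdx u t x * m t x + u t x * deriv (\<lambda>y. m t y) x + pdt m t x = 0"
    show "lax_compatible u m" unfolding lax_compatible_def
    proof (intro allI impI)
      fix lam :: complex and t \<psi> x
      assume lam: "lam \<noteq> 0"
        and P: "smooth_c \<psi> \<and> (\<forall>x. (cderiv ^^ 3) \<psi> x = - lam * of_real (m t x) * \<psi> x)"
      have "(cderiv ^^ 3) (Vop u lam t \<psi>) x - (- lam * of_real (pdt m t x) * \<psi> x - lam * of_real (m t x) * Vop u lam t \<psi> x) = 0"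
        using ID[OF lam, of \<psi> t x] P H by simp
      then show "(cderiv ^^ 3) (Vop u lam t \<psi>) x = - lam * of_real (pdt m t x) * \<psi> x - lam * of_real (m t x) * Vop u lam t \<psi> x"
        by simp
    qed
  next
    assume H: "lax_compatible u m"
    show "\<forall>t x. 3 * pdx u t x * m t x + u t x * deriv (\<lambda>y. m t y) x + pdt m t x = 0"
    proof (intro allI)
      fix t x0
      obtain B where B: "\<And>y. \<bar>m t y\<bar> \<le> B" using mB by blast
      obtain p0 p1 p2 where d0: "\<And>x. (p0 has_real_derivative p1 x) (at x)"
        and d1: "\<And>x. (p1 has_real_derivative p2 x) (at x)"
        and d2: "\<And>x. (p2 has_real_derivative m t x * p0 x) (at x)" and p00: "p0 x0 = 1"
        using ode3_exists[OF mcont B, of x0] by blast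
      have cp: "Cinf p0" by (rule ode_smooth[OF mC d0 d1 d2])
      define \<psi> where "\<psi> = (\<lambda>x. complex_of_real (p0 x))"
      have sm: "smooth_c \<psi>" unfolding \<psi>_def by (rule Cinf_smooth_c[OF cp])
      have "deriv p0 = p1" using d0 by (intro ext DERIV_imp_deriv)
      moreover have "deriv p1 = p2" using d1 by (intro ext DERIV_imp_deriv)
      moreover have "deriv p2 = (\<lambda>x. m t x * p0 x)" using d2 by (intro ext DERIV_imp_deriv)
      ultimately have D3: "(deriv ^^ 3) p0 = (\<lambda>x. m t x * p0 x)" by (simp add: numeral_eq_Suc)
      have e3: "(cderiv ^^ 3) \<psi> x = - (-1) * of_real (m t x) * \<psi> x" for x
        unfolding \<psi>_def cderiv_pow_of_real[OF cp] D3 by simp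
      have "(cderiv ^^ 3) (Vop u (-1) t \<psi>) x0 = - (-1) * of_real (pdt m t x0) * \<psi> x0 - (-1) * of_real (m t x0) * Vop u (-1) t \<psi> x0"
        using H sm e3 unfolding lax_compatible_def by (metis neg_equal_0_iff_equal zero_neq_one)
      with ID[of "-1" \<psi> t x0] sm e3
      have "(-1) * complex_of_real (3 * pdx u t x0 * m t x0 + u t x0 * deriv (\<lambda>y. m t y) x0 + pdt m t x0) * \<psi> x0 = 0"
        by simp
      hence "complex_of_real (3 * pdx u t x0 * m t x0 + u t x0 * deriv (\<lambda>y. m t y) x0 + pdt m t x0) * \<psi> x0 = 0"
        by (simp only: mult_minus_left mult_1 neg_equal_0_iff_equal)
      moreover have "\<psi> x0 = 1" by (simp add: \<psi>_def p00)
      ultimately show "3 * pdx u t x0 * m t x0 + u t x0 * deriv (\<lambda>y. m t y) x0 + pdt m t x0 = 0"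
        by (simp only: mult_1_right of_real_eq_0_iff)
    qed
  qed
qed




lemma Cinf_minus: "Cinf g \<Longrightarrow> Cinf h \<Longrightarrow> Cinf (\<lambda>x. g x - h x)"
proof -
  assume "Cinf g" "Cinf h"
  hence "Cinf (\<lambda>x. g x + (-1) * h x)" by (intro Cinf_add Cinf_mult Cinf_const)
  thus ?thesis by simp
qed

theorem theorem3p1:
  fixes u :: "real \<Rightarrow> real \<Rightarrow> real"
  assumes "smooth2 u" and "periodic_x u"
  shows "(lax_compatible u (\<lambda>t x. mean u t - pdx (pdx u) t x) \<longleftrightarrow>
           (\<forall>t x. mean (pdt u) t - pdx (pdx (pdt u)) t x + 3 * mean u t * pdx u t x
                  - 3 * pdx u t x * pdx (pdx u) t x - u t x * pdx (pdx (pdx u)) t x = 0))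
       \<and> (lax_compatible u (\<lambda>t x. - pdx (pdx u) t x) \<longleftrightarrow>
           (\<forall>t x. - pdx (pdx (pdt u)) t x
                  - 3 * pdx u t x * pdx (pdx u) t x - u t x * pdx (pdx (pdx u)) t x = 0))"
proof -
  note su = assms(1)
  have su2: "smooth2 (pdx (pdx u))" by (intro smooth2_pdx su)
  have su3: "smooth2 (pdx (pdx (pdx u)))" by (intro smooth2_pdx su)
  have C2: "Cinf (\<lambda>y. pdx (pdx u) t y)" for t by (rule Cinf_x[OF su2])
  have c2: "continuous_on UNIV (\<lambda>y. pdx (pdx u) t y)" for t by (rule cont_x[OF su2])
  have b2: "\<exists>B. \<forall>y. \<bar>pdx (pdx u) t y\<bar> \<le> B" for t
  proof (rule periodic_bounded[OF _ c2])
    fix y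
    show "pdx (pdx u) t (y + 1) = pdx (pdx u) t y"
      using periodic_iter[OF assms(2), of 2 t y] by (simp add: pdx_def numeral_2_eq_2)
  qed
  have D3: "(deriv ^^ 3) (\<lambda>y. u t y) x = pdx (pdx (pdx u)) t x" for t x
    by (simp add: pdx_def numeral_eq_Suc)
  have d2: "((\<lambda>y. pdx (pdx u) t y) has_real_derivative pdx (pdx (pdx u)) t x) (at x)" for t x
    using Dd[OF smooth2_dx[OF su2]] by (simp add: pdx_def)
  have dt2: "((\<lambda>s. pdx (pdx u) s x) has_real_derivative pdx (pdx (pdt u)) t x) (at t)" for t x
  proof -
    have "pdt (pdx (pdx u)) t x = pdx (pdt (pdx u)) t x" by (rule mixed[OF smooth2_pdx[OF su]])
    also have "pdt (pdx u) = pdx (pdt u)" using mixed[OF su] by (intro ext)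
    finally show ?thesis using Dd[OF smooth2_dt[OF su2], of x t] by (simp add: pdt_def)
  qed
  have md: "((\<lambda>s. mean u s) has_real_derivative mean (pdt u) t) (at t)" for t by (rule mean_deriv[OF su])
  have P1: "lax_compatible u (\<lambda>t x. mean u t - pdx (pdx u) t x) \<longleftrightarrow>
     (\<forall>t x. 3 * pdx u t x * (mean u t - pdx (pdx u) t x) + u t x * deriv (\<lambda>y. mean u t - pdx (pdx u) t y) x
        + pdt (\<lambda>t x. mean u t - pdx (pdx u) t x) t x = 0)"
  proof (rule main_general[OF su])
    show "Cinf (\<lambda>y. mean u t - pdx (pdx u) t y)" for t by (intro Cinf_minus Cinf_const C2)
    show "continuous_on UNIV (\<lambda>y. mean u t - pdx (pdx u) t y)" for t by (intro continuous_intros c2)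
    show "\<exists>B. \<forall>y. \<bar>mean u t - pdx (pdx u) t y\<bar> \<le> B" for t
    proof -
      obtain B where "\<forall>y. \<bar>pdx (pdx u) t y\<bar> \<le> B" using b2 by blast
      then have "\<forall>y. \<bar>mean u t - pdx (pdx u) t y\<bar> \<le> \<bar>mean u t\<bar> + B"
        using abs_triangle_ineq4 by (metis add_left_mono order_trans)
      then show ?thesis by blast
    qed
    show "deriv (\<lambda>y. mean u t - pdx (pdx u) t y) x = - (deriv ^^ 3) (\<lambda>y. u t y) x" for t x
      unfolding D3 by (intro DERIV_imp_deriv) (auto intro!: derivative_eq_intros d2)
  qed
  have E1: "3 * pdx u t x * (mean u t - pdx (pdx u) t x) + u t x * deriv (\<lambda>y. mean u t - pdx (pdx u) t y) x
        + pdt (\<lambda>t x. mean u t - pdx (pdx u) t x) t x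
      = mean (pdt u) t - pdx (pdx (pdt u)) t x + 3 * mean u t * pdx u t x
                  - 3 * pdx u t x * pdx (pdx u) t x - u t x * pdx (pdx (pdx u)) t x" for t x
  proof -
    have "deriv (\<lambda>y. mean u t - pdx (pdx u) t y) x = - pdx (pdx (pdx u)) t x"
      by (intro DERIV_imp_deriv) (auto intro!: derivative_eq_intros d2)
    moreover have "pdt (\<lambda>t x. mean u t - pdx (pdx u) t x) t x = mean (pdt u) t - pdx (pdx (pdt u)) t x"
      unfolding pdt_def[of "\<lambda>t x. mean u t - pdx (pdx u) t x"]
      by (intro DERIV_imp_deriv) (auto intro!: derivative_eq_intros md dt2)
    ultimately show ?thesis by (simp add: algebra_simps)
  qed
  have P2: "lax_compatible u (\<lambda>t x. - pdx (pdx u) t x) \<longleftrightarrow>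
     (\<forall>t x. 3 * pdx u t x * (- pdx (pdx u) t x) + u t x * deriv (\<lambda>y. - pdx (pdx u) t y) x
        + pdt (\<lambda>t x. - pdx (pdx u) t x) t x = 0)"
  proof (rule main_general[OF su])
    show "Cinf (\<lambda>y. - pdx (pdx u) t y)" for t
      using Cinf_minus[OF Cinf_const[of 0] C2[of t]] by simp
    show "continuous_on UNIV (\<lambda>y. - pdx (pdx u) t y)" for t by (intro continuous_intros c2)
    show "\<exists>B. \<forall>y. \<bar>- pdx (pdx u) t y\<bar> \<le> B" for t using b2 by simp
    show "deriv (\<lambda>y. - pdx (pdx u) t y) x = - (deriv ^^ 3) (\<lambda>y. u t y) x" for t x
      unfolding D3 by (intro DERIV_imp_deriv) (auto intro!: derivative_eq_intros d2)
  qed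
  have E2: "3 * pdx u t x * (- pdx (pdx u) t x) + u t x * deriv (\<lambda>y. - pdx (pdx u) t y) x
        + pdt (\<lambda>t x. - pdx (pdx u) t x) t x
      = - pdx (pdx (pdt u)) t x
                  - 3 * pdx u t x * pdx (pdx u) t x - u t x * pdx (pdx (pdx u)) t x" for t x
  proof -
    have "deriv (\<lambda>y. - pdx (pdx u) t y) x = - pdx (pdx (pdx u)) t x"
      by (intro DERIV_imp_deriv) (auto intro!: derivative_eq_intros d2)
    moreover have "pdt (\<lambda>t x. - pdx (pdx u) t x) t x = - pdx (pdx (pdt u)) t x"
      unfolding pdt_def[of "\<lambda>t x. - pdx (pdx u) t x"]
      by (intro DERIV_imp_deriv) (auto intro!: derivative_eq_intros dt2)
    ultimately show ?thesis by (simp add: algebra_simps)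
  qed
  have Q1: "lax_compatible u (\<lambda>t x. mean u t - pdx (pdx u) t x) \<longleftrightarrow>
           (\<forall>t x. mean (pdt u) t - pdx (pdx (pdt u)) t x + 3 * mean u t * pdx u t x
                  - 3 * pdx u t x * pdx (pdx u) t x - u t x * pdx (pdx (pdx u)) t x = 0)"
    using P1 by (simp only: E1)
  have Q2: "lax_compatible u (\<lambda>t x. - pdx (pdx u) t x) \<longleftrightarrow>
           (\<forall>t x. - pdx (pdx (pdt u)) t x
                  - 3 * pdx u t x * pdx (pdx u) t x - u t x * pdx (pdx (pdx u)) t x = 0)"
    using P2 by (simp only: E2)
  show ?thesis using Q1 Q2 by (rule conjI)
qed


end
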